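(* Let $n\in\mathbb{N}^*$ and let $\mathbb{R}^n$ carry the euclidean distance $d_2$. (1) For every real $t>0$, the set $\mathrm{age}_t((\mathbb{R}^n,d_2))$ of isometry types of finite subspaces $\mathbb X$ of $(\mathbb{R}^n,d_2)$ with $d(\mathbb X)\ge t$ is an ideal which is not representable. (2) For every subset $A\subset\mathbb{R}_+^*$ with $|A|<2^{\aleph_0}$, the set $\mathrm{age}_{-A}((\mathbb{R}^n,d_2))$ of isometry types of finite subspaces $\mathbb X$ of $(\mathbb{R}^n,d_2)$ none of whose non-zero distances belongs to $A$ is an ideal, and there is a subset $Y\subseteq\mathbb{R}^n$ whose age (with the induced euclidean distance) equals $\mathrm{age}_{-A}((\mathbb{R}^n,d_2))$.
   Context: For a metric space $\mathbb X$, $d(\mathbb X)$ is the infimum of its non-zero distances ($+\infty$ if $\mathbb X$ has at most one point). Finite metric spaces are considered up to isometry and ordered by isometric embeddability; the age of a metric space is the set of isometry types of its finite subspaces. An ideal is a non-empty, downward closed, up-directed set of such isometry types; it is representable if it equals the age of some metric space. *)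

theory Defs
  imports "HOL-Analysis.Analysis" "HOL-Library.Equipollence"
begin

definition isometric :: "'a set \<Rightarrow> ('a \<Rightarrow> 'a \<Rightarrow> real) \<Rightarrow> 'b set \<Rightarrow> ('b \<Rightarrow> 'b \<Rightarrow> real) \<Rightarrow> bool" where
  "isometric A dA B dB \<longleftrightarrow>
     (\<exists>f. bij_betw f A B \<and> (\<forall>x\<in>A. \<forall>y\<in>A. dB (f x) (f y) = dA x y))"

text \<open>Canonical representatives of finite metric spaces: finite carriers in nat.\<close>
type_synonym fms = "nat set \<times> (nat \<Rightarrow> nat \<Rightarrow> real)"

definition fin_metric :: "fms \<Rightarrow> bool" where
  "fin_metric X \<longleftrightarrow> finite (fst X) \<and> Metric_space (fst X) (snd X)"

definition iso_type :: "'a set \<Rightarrow> ('a \<Rightarrow> 'a \<Rightarrow> real) \<Rightarrow> fms set" where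
  "iso_type F d = {X. fin_metric X \<and> isometric (fst X) (snd X) F d}"

definition fin_types :: "fms set set" where
  "fin_types = {iso_type (fst X) (snd X) | X. fin_metric X}"

definition embeds :: "fms set \<Rightarrow> fms set \<Rightarrow> bool" where
  "embeds \<tau> \<sigma> \<longleftrightarrow> (\<exists>X\<in>\<tau>. \<exists>Y\<in>\<sigma>. \<exists>Z. Z \<subseteq> fst Y \<and> isometric (fst X) (snd X) Z (snd Y))"

definition ideal_types :: "fms set set \<Rightarrow> bool" where
  "ideal_types I \<longleftrightarrow> I \<subseteq> fin_types \<and> I \<noteq> {}
     \<and> (\<forall>\<sigma>\<in>I. \<forall>\<tau>\<in>fin_types. embeds \<tau> \<sigma> \<longrightarrow> \<tau> \<in> I)
     \<and> (\<forall>\<sigma>\<in>I. \<forall>\<tau>\<in>I. \<exists>\<rho>\<in>I. embeds \<sigma> \<rho> \<and> embeds \<tau> \<rho>)"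

definition age :: "'a set \<Rightarrow> ('a \<Rightarrow> 'a \<Rightarrow> real) \<Rightarrow> fms set set" where
  "age M d = {iso_type F d | F. F \<subseteq> M \<and> finite F}"

text \<open>d(X): infimum of non-zero distances, +\<infinity> if at most one point.\<close>
definition min_dist :: "'a set \<Rightarrow> ('a \<Rightarrow> 'a \<Rightarrow> real) \<Rightarrow> ereal" where
  "min_dist F d = Inf {ereal (d x y) | x y. x \<in> F \<and> y \<in> F \<and> x \<noteq> y}"

definition age_ge :: "real \<Rightarrow> 'a set \<Rightarrow> ('a \<Rightarrow> 'a \<Rightarrow> real) \<Rightarrow> fms set set" where
  "age_ge t M d = {iso_type F d | F. F \<subseteq> M \<and> finite F \<and> min_dist F d \<ge> ereal t}"

definition age_avoid :: "real set \<Rightarrow> 'a set \<Rightarrow> ('a \<Rightarrow> 'a \<Rightarrow> real) \<Rightarrow> fms set set" where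
  "age_avoid A M d = {iso_type F d | F. F \<subseteq> M \<and> finite F \<and>
      (\<forall>x\<in>F. \<forall>y\<in>F. x \<noteq> y \<longrightarrow> d x y \<notin> A)}"

end

theory Submission
  imports Defs
begin

unbundle cardinal_syntax

lemma isometric_refl: "isometric A d A d"
  unfolding isometric_def by (rule exI[of _ id]) auto

lemma isometric_sym: assumes "isometric A dA B dB" shows "isometric B dB A dA"
proof -
  obtain f where f: "bij_betw f A B" "\<forall>x\<in>A. \<forall>y\<in>A. dB (f x) (f y) = dA x y"
    using assms unfolding isometric_def by blast
  let ?g = "inv_into A f"
  have "bij_betw ?g B A" using f(1) by (rule bij_betw_inv_into)
  moreover have "\<forall>x\<in>B. \<forall>y\<in>B. dA (?g x) (?g y) = dB x y"
  proof (intro ballI)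
    fix x y assume xy: "x \<in> B" "y \<in> B"
    have "?g x \<in> A" "?g y \<in> A" using xy f(1) by (metis bij_betw_def inv_into_into)+
    moreover have "f (?g x) = x" "f (?g y) = y" using xy f(1) by (meson bij_betw_inv_into_right)+
    ultimately show "dA (?g x) (?g y) = dB x y" using f(2) by metis
  qed
  ultimately show ?thesis unfolding isometric_def by blast
qed

lemma isometric_trans: assumes "isometric A dA B dB" "isometric B dB C dC" shows "isometric A dA C dC"
proof -
  obtain f where f: "bij_betw f A B" "\<forall>x\<in>A. \<forall>y\<in>A. dB (f x) (f y) = dA x y"
    using assms(1) unfolding isometric_def by blast
  obtain g where g: "bij_betw g B C" "\<forall>x\<in>B. \<forall>y\<in>B. dC (g x) (g y) = dB x y"
    using assms(2) unfolding isometric_def by blast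
  have "bij_betw (g \<circ> f) A C" using f(1) g(1) by (rule bij_betw_trans)
  moreover have "\<forall>x\<in>A. \<forall>y\<in>A. dC ((g\<circ>f) x) ((g\<circ>f) y) = dA x y"
    using f g by (auto simp: bij_betw_def)
  ultimately show ?thesis unfolding isometric_def by blast
qed

lemma isometric_image:
  assumes "bij_betw f A B" "\<forall>x\<in>A. \<forall>y\<in>A. dB (f x) (f y) = dA x y" "Z \<subseteq> A"
  shows "isometric Z dA (f ` Z) dB"
proof -
  have "bij_betw f Z (f ` Z)" using assms(1,3) by (meson bij_betw_subset)
  then show ?thesis unfolding isometric_def using assms(2,3) by blast
qed

lemma canon_exists:
  assumes "finite F" "Metric_space F d"
  shows "\<exists>X. fin_metric X \<and> isometric (fst X) (snd X) F d"
proof -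
  obtain h where h: "bij_betw h {0..<card F} F" using ex_bij_betw_nat_finite[OF assms(1)] by blast
  define X where "X = ({0..<card F}, \<lambda>i j. d (h i) (h j))"
  have hin: "\<And>i. i \<in> {0..<card F} \<Longrightarrow> h i \<in> F" using h by (auto simp: bij_betw_def)
  have inj: "inj_on h {0..<card F}" using h by (auto simp: bij_betw_def)
  have "Metric_space {0..<card F} (\<lambda>i j. d (h i) (h j))"
  proof
    fix x y show "0 \<le> d (h x) (h y)" using assms(2) by (simp add: Metric_space.nonneg)
    show "d (h x) (h y) = d (h y) (h x)" using assms(2) by (metis Metric_space.commute)
  next
    fix x y assume "x \<in> {0..<card F}" "y \<in> {0..<card F}"
    then show "(d (h x) (h y) = 0) = (x = y)" using hin inj Metric_space.zero[OF assms(2)]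
      by (metis inj_on_def)
  next
    fix x y z assume "x \<in> {0..<card F}" "y \<in> {0..<card F}" "z \<in> {0..<card F}"
    then show "d (h x) (h z) \<le> d (h x) (h y) + d (h y) (h z)"
      using hin Metric_space.triangle[OF assms(2)] by blast
  qed
  then have "fin_metric X" unfolding fin_metric_def X_def by simp
  moreover have "isometric (fst X) (snd X) F d" unfolding isometric_def X_def using h by auto
  ultimately show ?thesis by blast
qed

lemma iso_type_cong: assumes "isometric F d G e" shows "iso_type F d = iso_type G e"
proof -
  have "isometric G e F d" using assms isometric_sym by blast
  then show ?thesis unfolding iso_type_def
    using assms isometric_trans[of _ _ F d G e] isometric_trans[of _ _ G e F d] by blast
qed

lemma iso_type_eq_imp:
  assumes "finite F" "Metric_space F d" "iso_type F d = iso_type G e"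
  shows "isometric F d G e"
proof -
  obtain X where X: "fin_metric X" "isometric (fst X) (snd X) F d" using canon_exists assms by blast
  then have "X \<in> iso_type G e" using assms(3) unfolding iso_type_def by blast
  then have "isometric (fst X) (snd X) G e" unfolding iso_type_def by blast
  then show ?thesis using X(2) isometric_sym isometric_trans by blast
qed

lemma iso_type_in_fin_types:
  assumes "finite F" "Metric_space F d" shows "iso_type F d \<in> fin_types"
proof -
  obtain X where X: "fin_metric X" "isometric (fst X) (snd X) F d" using canon_exists assms by blast
  then have "iso_type F d = iso_type (fst X) (snd X)" using iso_type_cong isometric_sym by metis
  then show ?thesis unfolding fin_types_def using X by blast
qed

lemma embeds_subset:
  assumes "finite F" "Metric_space F d" "G \<subseteq> F"
  shows "embeds (iso_type G d) (iso_type F d)"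
proof -
  obtain Y where Y: "fin_metric Y" "isometric (fst Y) (snd Y) F d" using canon_exists assms by blast
  have "isometric F d (fst Y) (snd Y)" using Y(2) isometric_sym by blast
  then obtain f where f: "bij_betw f F (fst Y)" "\<forall>x\<in>F. \<forall>y\<in>F. snd Y (f x) (f y) = d x y"
    unfolding isometric_def by blast
  have GZ: "isometric G d (f ` G) (snd Y)" using isometric_image[OF f assms(3)] .
  have fG: "finite G" using assms finite_subset by blast
  have mG: "Metric_space G d" using assms Metric_space.subspace by blast
  obtain X where X: "fin_metric X" "isometric (fst X) (snd X) G d" using canon_exists fG mG by blast
  have "X \<in> iso_type G d" using X unfolding iso_type_def by blast
  moreover have "Y \<in> iso_type F d" using Y unfolding iso_type_def by blast
  moreover have "f ` G \<subseteq> fst Y" using f(1) assms(3) by (auto simp: bij_betw_def)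
  moreover have "isometric (fst X) (snd X) (f ` G) (snd Y)" using X(2) GZ isometric_trans by blast
  ultimately show ?thesis unfolding embeds_def by blast
qed

lemma embeds_down:
  assumes "\<tau> \<in> fin_types" "embeds \<tau> (iso_type F d)"
  shows "\<exists>G\<subseteq>F. \<tau> = iso_type G d"
proof -
  obtain X Y Z where XYZ: "X \<in> \<tau>" "Y \<in> iso_type F d" "Z \<subseteq> fst Y"
    "isometric (fst X) (snd X) Z (snd Y)" using assms(2) unfolding embeds_def by blast
  obtain X0 where X0: "fin_metric X0" "\<tau> = iso_type (fst X0) (snd X0)"
    using assms(1) unfolding fin_types_def by blast
  have "isometric (fst X) (snd X) (fst X0) (snd X0)" using XYZ(1) X0(2) unfolding iso_type_def by blast
  then have t: "\<tau> = iso_type (fst X) (snd X)" using X0(2) iso_type_cong by metis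
  obtain f where f: "bij_betw f (fst Y) F" "\<forall>x\<in>fst Y. \<forall>y\<in>fst Y. d (f x) (f y) = snd Y x y"
    using XYZ(2) unfolding iso_type_def isometric_def by blast
  have "isometric Z (snd Y) (f ` Z) d" using isometric_image[OF f XYZ(3)] .
  then have "isometric (fst X) (snd X) (f ` Z) d" using XYZ(4) isometric_trans by blast
  then have "\<tau> = iso_type (f ` Z) d" using t iso_type_cong by metis
  moreover have "f ` Z \<subseteq> F" using f(1) XYZ(3) by (auto simp: bij_betw_def)
  ultimately show ?thesis by blast
qed

lemma ideal_family:
  assumes M: "Metric_space M d"
    and emp: "P {}"
    and down: "\<And>F G. F \<subseteq> M \<Longrightarrow> finite F \<Longrightarrow> P F \<Longrightarrow> G \<subseteq> F \<Longrightarrow> P G"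
    and dir: "\<And>F G. F \<subseteq> M \<Longrightarrow> finite F \<Longrightarrow> P F \<Longrightarrow> G \<subseteq> M \<Longrightarrow> finite G \<Longrightarrow> P G \<Longrightarrow>
       \<exists>H. H \<subseteq> M \<and> finite H \<and> P H \<and> (\<exists>F'\<subseteq>H. \<exists>G'\<subseteq>H. isometric F d F' d \<and> isometric G d G' d)"
  shows "ideal_types {iso_type F d | F. F \<subseteq> M \<and> finite F \<and> P F}"
  unfolding ideal_types_def
proof (intro conjI)
  show "{iso_type F d | F. F \<subseteq> M \<and> finite F \<and> P F} \<subseteq> fin_types"
    using iso_type_in_fin_types Metric_space.subspace[OF M] by blast
  show "{iso_type F d | F. F \<subseteq> M \<and> finite F \<and> P F} \<noteq> {}" using emp by blast
  show "\<forall>\<sigma>\<in>{iso_type F d | F. F \<subseteq> M \<and> finite F \<and> P F}. \<forall>\<tau>\<in>fin_types. embeds \<tau> \<sigma> \<longrightarrow>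
      \<tau> \<in> {iso_type F d | F. F \<subseteq> M \<and> finite F \<and> P F}"
  proof (intro ballI impI)
    fix \<sigma> \<tau> assume s: "\<sigma> \<in> {iso_type F d | F. F \<subseteq> M \<and> finite F \<and> P F}" and t: "\<tau> \<in> fin_types"
      and e: "embeds \<tau> \<sigma>"
    obtain F where F: "\<sigma> = iso_type F d" "F \<subseteq> M" "finite F" "P F" using s by blast
    obtain G where G: "G \<subseteq> F" "\<tau> = iso_type G d" using embeds_down t e F(1) by blast
    have "G \<subseteq> M" "finite G" "P G" using G F down finite_subset by blast+
    then show "\<tau> \<in> {iso_type F d | F. F \<subseteq> M \<and> finite F \<and> P F}" using G by blast
  qed
  show "\<forall>\<sigma>\<in>{iso_type F d | F. F \<subseteq> M \<and> finite F \<and> P F}. \<forall>\<tau>\<in>{iso_type F d | F. F \<subseteq> M \<and> finite F \<and> P F}.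
     \<exists>\<rho>\<in>{iso_type F d | F. F \<subseteq> M \<and> finite F \<and> P F}. embeds \<sigma> \<rho> \<and> embeds \<tau> \<rho>"
  proof (intro ballI)
    fix \<sigma> \<tau> assume s: "\<sigma> \<in> {iso_type F d | F. F \<subseteq> M \<and> finite F \<and> P F}"
      and t: "\<tau> \<in> {iso_type F d | F. F \<subseteq> M \<and> finite F \<and> P F}"
    obtain F where F: "\<sigma> = iso_type F d" "F \<subseteq> M" "finite F" "P F" using s by blast
    obtain G where G: "\<tau> = iso_type G d" "G \<subseteq> M" "finite G" "P G" using t by blast
    obtain H F' G' where H: "H \<subseteq> M" "finite H" "P H" "F' \<subseteq> H" "G' \<subseteq> H"
      "isometric F d F' d" "isometric G d G' d" using dir[OF F(2-4) G(2-4)] by blast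
    have mH: "Metric_space H d" using H(1) Metric_space.subspace[OF M] by blast
    have "embeds \<sigma> (iso_type H d)" using F(1) iso_type_cong[OF H(6)] embeds_subset[OF H(2) mH H(4)] by simp
    moreover have "embeds \<tau> (iso_type H d)" using G(1) iso_type_cong[OF H(7)] embeds_subset[OF H(2) mH H(5)] by simp
    ultimately show "\<exists>\<rho>\<in>{iso_type F d | F. F \<subseteq> M \<and> finite F \<and> P F}. embeds \<sigma> \<rho> \<and> embeds \<tau> \<rho>"
      using H by blast
  qed
qed

lemma age_ideal: assumes "Metric_space M d" shows "ideal_types (age M d)"
proof -
  have "ideal_types {iso_type F d | F. F \<subseteq> M \<and> finite F \<and> True}"
  proof (rule ideal_family[OF assms])
    fix F G assume "F \<subseteq> M" "finite F" "G \<subseteq> M" "finite G"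
    then show "\<exists>H. H \<subseteq> M \<and> finite H \<and> True \<and> (\<exists>F'\<subseteq>H. \<exists>G'\<subseteq>H. isometric F d F' d \<and> isometric G d G' d)"
      by (intro exI[of _ "F \<union> G"]) (auto intro!: isometric_refl)
  qed auto
  then show ?thesis unfolding age_def by simp
qed


lemma min_dist_ge: "ereal t \<le> min_dist F d \<longleftrightarrow> (\<forall>x\<in>F. \<forall>y\<in>F. x \<noteq> y \<longrightarrow> t \<le> d x y)"
proof
  assume h: "ereal t \<le> min_dist F d"
  show "\<forall>x\<in>F. \<forall>y\<in>F. x \<noteq> y \<longrightarrow> t \<le> d x y"
  proof (intro ballI impI)
    fix x y assume "x \<in> F" "y \<in> F" "x \<noteq> y"
    then have "ereal t \<le> ereal (d x y)" using h unfolding min_dist_def le_Inf_iff by blast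
    then show "t \<le> d x y" by simp
  qed
qed (auto simp: min_dist_def le_Inf_iff)

lemma Metric_space_dist: "Metric_space (S::'a::metric_space set) dist"
  using Metric_space.subspace[OF Met_TC.Metric_space_axioms] by blast

lemma translate_isometric:
  fixes v :: "'a::real_normed_vector"
  shows "isometric G dist ((\<lambda>x. x + v) ` G) dist"
proof -
  have "bij_betw (\<lambda>x. x + v) G ((\<lambda>x. x + v) ` G)" by (rule bij_betw_imageI) (auto simp: inj_on_def)
  then show ?thesis unfolding isometric_def by (intro exI[of _ "\<lambda>x. x + v"]) (simp add: dist_norm)
qed

lemma age_ge_ideal:
  fixes t :: real
  shows "ideal_types (age_ge t (UNIV::('a::euclidean_space) set) dist)"
proof -
  have "ideal_types {iso_type F dist | F. F \<subseteq> (UNIV::'a set) \<and> finite F \<and> ereal t \<le> min_dist F dist}"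
  proof (rule ideal_family[OF Metric_space_dist])
    show "ereal t \<le> min_dist {} dist" by (simp add: min_dist_ge)
  next
    fix F G :: "'a set" assume "ereal t \<le> min_dist F dist" "G \<subseteq> F"
    then show "ereal t \<le> min_dist G dist" by (auto simp: min_dist_ge)
  next
    fix F G :: "'a set" assume F: "finite F" "ereal t \<le> min_dist F dist"
      and G: "finite G" "ereal t \<le> min_dist G dist"
    define B where "B = (\<Sum>x\<in>F\<union>G. norm x)"
    have nB: "\<And>x. x \<in> F \<union> G \<Longrightarrow> norm x \<le> B" unfolding B_def
      using F(1) G(1) by (intro member_le_sum) auto
    obtain v :: 'a where v: "norm v = \<bar>t\<bar> + 2 * B"
      using vector_choose_size[of "\<bar>t\<bar> + 2 * B"] nB
      by (metis F(1) G(1) B_def abs_ge_zero add_nonneg_nonneg finite_UnI mult_nonneg_nonneg norm_ge_zero sum_nonneg zero_le_numeral)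
    define H where "H = F \<union> (\<lambda>x. x + v) ` G"
    have mixed: "t \<le> dist f (g + v)" if "f \<in> F" "g \<in> G" for f g
    proof -
      have "norm f \<le> B" "norm g \<le> B" using nB that by auto
      moreover have "norm v \<le> norm (f - (g + v)) + norm f + norm g"
      proof -
        have "v = (f - g) - (f - (g+v))" by (simp add: algebra_simps)
        then have "norm v \<le> norm (f - g) + norm (f - (g+v))" using norm_triangle_ineq4[of "f - g" "f - (g+v)"] by simp
        then show ?thesis using norm_triangle_ineq4[of f g] by linarith
      qed
      ultimately show ?thesis using v by (simp add: dist_norm)
    qed
    have "ereal t \<le> min_dist H dist"
      unfolding min_dist_ge H_def
    proof (intro ballI impI)
      fix x y assume x: "x \<in> F \<union> (\<lambda>x. x + v) ` G" and y: "y \<in> F \<union> (\<lambda>x. x + v) ` G" and xy: "x \<noteq> y"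
      show "t \<le> dist x y"
      proof (cases "x \<in> F")
        case True
        show ?thesis
        proof (cases "y \<in> F")
          case True then show ?thesis using \<open>x \<in> F\<close> xy F(2) by (auto simp: min_dist_ge)
        next
          case False then obtain g where "g \<in> G" "y = g + v" using y by auto
          then show ?thesis using mixed \<open>x \<in> F\<close> by auto
        qed
      next
        case False then obtain g where g: "g \<in> G" "x = g + v" using x by auto
        show ?thesis
        proof (cases "y \<in> F")
          case True then show ?thesis using mixed g by (auto simp: dist_commute)
        next
          case False then obtain g' where "g' \<in> G" "y = g' + v" using y by auto
          then show ?thesis using g xy G(2) by (auto simp: min_dist_ge dist_norm)
        qed
      qed
    qed
    moreover have "finite H" using F G H_def by auto
    moreover have "\<exists>F'\<subseteq>H. \<exists>G'\<subseteq>H. isometric F dist F' dist \<and> isometric G dist G' dist"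
    proof -
      have "F \<subseteq> H" "(\<lambda>x. x + v) ` G \<subseteq> H" unfolding H_def by auto
      then show ?thesis using isometric_refl[of F dist] translate_isometric[of G v] by blast
    qed
    ultimately have hH: "H \<subseteq> UNIV \<and> finite H \<and> ereal t \<le> min_dist H dist \<and>
       (\<exists>F'\<subseteq>H. \<exists>G'\<subseteq>H. isometric F dist F' dist \<and> isometric G dist G' dist)" by simp
    show "\<exists>H::'a set. H \<subseteq> UNIV \<and> finite H \<and> ereal t \<le> min_dist H dist \<and>
       (\<exists>F'\<subseteq>H. \<exists>G'\<subseteq>H. isometric F dist F' dist \<and> isometric G dist G' dist)"
      using hH by blast
  qed
  then show ?thesis unfolding age_ge_def .
qed

lemma packing:
  fixes t k :: real assumes "t > 0"
  shows "\<exists>N. \<forall>(c::'a::euclidean_space) G. finite G \<longrightarrow> G \<subseteq> cball c k \<longrightarrow>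
     (\<forall>x\<in>G. \<forall>y\<in>G. x \<noteq> y \<longrightarrow> t \<le> dist x y) \<longrightarrow> card G \<le> N"
proof -
  obtain C where C: "C \<subseteq> cball (0::'a) k" "finite C" "cball 0 k \<subseteq> \<Union> ((\<lambda>x. ball x (t/2)) ` C)"
    apply (rule compactE_image[of "cball (0::'a) k" "cball 0 k" "\<lambda>x. ball x (t/2)"])
    apply auto
    subgoal for x using assms by (intro bexI[of _ x]) auto
    done
  show ?thesis
  proof (intro exI[of _ "card C"] allI impI)
    fix c :: 'a and G assume G: "finite G" "G \<subseteq> cball c k" "\<forall>x\<in>G. \<forall>y\<in>G. x \<noteq> y \<longrightarrow> t \<le> dist x y"
    define \<phi> where "\<phi> g = (SOME z. z \<in> C \<and> g - c \<in> ball z (t/2))" for g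
    have ph: "\<phi> g \<in> C \<and> g - c \<in> ball (\<phi> g) (t/2)" if "g \<in> G" for g
    proof -
      have "g - c \<in> cball 0 k" using G(2) that by (auto simp: dist_norm norm_minus_commute)
      then have "\<exists>z. z \<in> C \<and> g - c \<in> ball z (t/2)" using C(3) by blast
      then show ?thesis unfolding \<phi>_def by (rule someI_ex)
    qed
    have "inj_on \<phi> G"
    proof (rule inj_onI, rule ccontr)
      fix x y assume xy: "x \<in> G" "y \<in> G" "\<phi> x = \<phi> y" "x \<noteq> y"
      have "dist (\<phi> x) (x - c) < t/2" "dist (\<phi> x) (y - c) < t/2" using ph[OF xy(1)] ph[OF xy(2)] xy(3) by auto
      then have "dist (x - c) (y - c) < t" using dist_triangle[of "x-c" "y-c" "\<phi> x"] dist_commute[of "x-c" "\<phi> x"] by linarith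
      moreover have "dist (x - c) (y - c) = dist x y" by (simp add: dist_norm)
      ultimately show False using G(3) xy by force
    qed
    moreover have "\<phi> ` G \<subseteq> C" using ph by auto
    ultimately show "card G \<le> card C" using card_inj_on_le C(2) by blast
  qed
qed

lemma not_rep:
  fixes M :: "'b set" and t :: real
  assumes t: "t > 0" and M: "Metric_space M d"
    and eq: "age M d = age_ge t (UNIV::('a::euclidean_space) set) dist"
  shows False
proof -
  have a: "\<exists>G::'a set. finite G \<and> (\<forall>x\<in>G. \<forall>y\<in>G. x \<noteq> y \<longrightarrow> t \<le> dist x y) \<and> isometric F d G dist"
    if F: "F \<subseteq> M" "finite F" for F
  proof -
    have "iso_type F d \<in> age M d" unfolding age_def using F by blast
    then obtain G :: "'a set" where G: "iso_type F d = iso_type G dist" "finite G" "ereal t \<le> min_dist G dist"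
      unfolding eq age_ge_def by blast
    have "isometric F d G dist" using iso_type_eq_imp[OF F(2) Metric_space.subspace[OF M F(1)] G(1)] .
    then show ?thesis using G(2,3) by (auto simp: min_dist_ge)
  qed
  have b: "\<exists>x\<in>M. \<exists>y\<in>M. d x y = s" if s: "s \<ge> t" for s
  proof -
    obtain e :: 'a where e: "norm e = s" using vector_choose_size[of s] s t by auto
    have e0: "e \<noteq> 0" using e s t by auto
    have "ereal t \<le> min_dist {0, e} dist" unfolding min_dist_ge using e s e0 by (auto simp: dist_norm)
    then have "iso_type {0, e} dist \<in> age_ge t (UNIV::'a set) dist" unfolding age_ge_def by blast
    then obtain F where F: "iso_type {0, e} dist = iso_type F d" "F \<subseteq> M" "finite F"
      unfolding eq[symmetric] age_def by blast
    have "isometric {0, e} dist F d" using iso_type_eq_imp[OF _ Metric_space_dist F(1)] by simp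
    then obtain f where f: "bij_betw f {0, e} F" "\<forall>x\<in>{0,e}. \<forall>y\<in>{0,e}. d (f x) (f y) = dist x y"
      unfolding isometric_def by blast
    have "f 0 \<in> M" "f e \<in> M" using f(1) F(2) by (auto simp: bij_betw_def)
    moreover have "d (f 0) (f e) = s" using f(2) e by auto
    ultimately show ?thesis by blast
  qed
  obtain x0 where x0: "x0 \<in> M" using b[of t] by auto
  have fin: "finite {y\<in>M. d x0 y \<le> real k}" for k :: nat
  proof (rule ccontr)
    assume inf: "infinite {y\<in>M. d x0 y \<le> real k}"
    obtain N where N: "\<forall>(c::'a) G. finite G \<longrightarrow> G \<subseteq> cball c (real k) \<longrightarrow>
       (\<forall>x\<in>G. \<forall>y\<in>G. x \<noteq> y \<longrightarrow> t \<le> dist x y) \<longrightarrow> card G \<le> N"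
      using packing[OF t] by blast
    obtain S where S: "finite S" "card S = N + 1" "S \<subseteq> {y\<in>M. d x0 y \<le> real k}"
      using infinite_arbitrarily_large[OF inf] by blast
    define S' where "S' = insert x0 S"
    have "card S \<le> card S'" using card_insert_le[of S x0] unfolding S'_def .
    then have S': "S' \<subseteq> M" "finite S'" "card S' \<ge> N + 1" using S x0 unfolding S'_def
      by auto
    obtain G :: "'a set" where G: "finite G" "\<forall>x\<in>G. \<forall>y\<in>G. x \<noteq> y \<longrightarrow> t \<le> dist x y"
      "isometric S' d G dist" using a[OF S'(1,2)] by blast
    obtain f where f: "bij_betw f S' G" "\<forall>x\<in>S'. \<forall>y\<in>S'. dist (f x) (f y) = d x y"
      using G(3) unfolding isometric_def by blast
    have "G \<subseteq> cball (f x0) (real k)"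
    proof
      fix g assume "g \<in> G"
      then obtain y where y: "y \<in> S'" "g = f y" using f(1) by (auto simp: bij_betw_def)
      have "d x0 y \<le> real k"
      proof (cases "y = x0")
        case True then show ?thesis using Metric_space.zero[OF M x0 x0] by simp
      next
        case False then show ?thesis using y S(3) unfolding S'_def by auto
      qed
      then show "g \<in> cball (f x0) (real k)" using f(2) y S'_def by auto
    qed
    then have "card G \<le> N" using N G(1,2) by blast
    moreover have "card G = card S'" using f(1) bij_betw_same_card by metis
    ultimately show False using S'(3) by simp
  qed
  have "M \<subseteq> (\<Union>k::nat. {y\<in>M. d x0 y \<le> real k})"
  proof
    fix y assume "y \<in> M"
    moreover have "d x0 y \<le> real (nat \<lceil>d x0 y\<rceil>)" by (rule real_nat_ceiling_ge)
    ultimately show "y \<in> (\<Union>k::nat. {y\<in>M. d x0 y \<le> real k})" by blast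
  qed
  moreover have "countable (\<Union>k::nat. {y\<in>M. d x0 y \<le> real k})"
    using fin by (intro countable_UN) (auto intro: countable_finite)
  ultimately have cM: "countable M" using countable_subset by blast
  then have "countable ((\<lambda>(x,y). d x y) ` (M \<times> M))" by (intro countable_image countable_SIGMA)
  moreover have "{t..t+1} \<subseteq> (\<lambda>(x,y). d x y) ` (M \<times> M)"
  proof
    fix s assume "s \<in> {t..t+1}"
    then obtain x y where "x \<in> M" "y \<in> M" "d x y = s" using b[of s] by auto
    then show "s \<in> (\<lambda>(x,y). d x y) ` (M \<times> M)" by (intro image_eqI[of s _ "(x,y)"]) auto
  qed
  ultimately have "countable {t..t+1}" by (rule countable_subset[rotated])
  moreover have "uncountable {t..t+1}" using uncountable_closed_interval[of t "t+1"] by simp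
  ultimately show False by blast
qed


lemma lepoll_ordLeq: "A \<lesssim> B \<longleftrightarrow> |A| \<le>o |B|"
  unfolding lepoll_def using card_of_ordLeq by blast

lemma lesspoll_ordLess: "A \<prec> B \<longleftrightarrow> |A| <o |B|"
  unfolding lesspoll_def lepoll_ordLeq eqpoll_iff_card_of_ordIso
  using ordLeq_iff_ordLess_or_ordIso[of "|A|" "|B|"] not_ordLess_ordIso[of "|A|" "|B|"] by blast

lemma times_lesspoll:
  assumes U: "infinite U" and X: "X \<prec> U" and Z: "Z \<prec> U"
  shows "X \<times> Z \<prec> U"
proof (cases "finite X \<and> finite Z")
  case True then have "finite (X \<times> Z)" by auto
  then show ?thesis by (rule finite_lesspoll_infinite[OF U])
next
  case False
  show ?thesis
  proof (cases "X = {} \<or> Z = {}")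
    case True then have "finite (X \<times> Z)" by auto
    then show ?thesis by (rule finite_lesspoll_infinite[OF U])
  next
    case ne: False
    have "|X| \<le>o |Z| \<or> |Z| \<le>o |X|" using ordLeq_total[OF card_of_Well_order card_of_Well_order] .
    then show ?thesis
    proof
      assume le: "|X| \<le>o |Z|"
      have "infinite Z" using False card_of_ordLeq_finite[OF le] by blast
      then have "|X \<times> Z| =o |Z|" using card_of_Times_infinite_simps(3)[of Z X] le ne by simp
      moreover have "|Z| <o |U|" using Z unfolding lesspoll_ordLess .
      ultimately show ?thesis unfolding lesspoll_ordLess by (rule ordIso_ordLess_trans)
    next
      assume le: "|Z| \<le>o |X|"
      have "infinite X" using False card_of_ordLeq_finite[OF le] by blast
      then have "|X \<times> Z| =o |X|" using card_of_Times_infinite_simps(1)[of X Z] le ne by simp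
      moreover have "|X| <o |U|" using X unfolding lesspoll_ordLess .
      ultimately show ?thesis unfolding lesspoll_ordLess by (rule ordIso_ordLess_trans)
    qed
  qed
qed

lemma lists_lepoll:
  assumes inf: "infinite A" shows "lists A \<lesssim> A"
proof -
  have AA: "A \<times> A \<lesssim> A" using card_of_Times_same_infinite[OF inf] lepoll_ordLeq ordIso_iff_ordLeq by blast
  have n: "{xs\<in>lists A. length xs = n} \<lesssim> A" for n
  proof (induction n)
    case 0
    have "{xs\<in>lists A. length xs = 0} = {[]}" by auto
    moreover obtain a where "a \<in> A" using inf by (metis ex_in_conv finite.emptyI)
    ultimately show ?case by (metis singleton_lepoll insert_absorb)
  next
    case (Suc n)
    have "{xs\<in>lists A. length xs = Suc n} \<subseteq> (\<lambda>(a,xs). a # xs) ` (A \<times> {xs\<in>lists A. length xs = n})"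
    proof
      fix xs assume "xs \<in> {xs\<in>lists A. length xs = Suc n}"
      then obtain a ys where "xs = a # ys" "a \<in> A" "ys \<in> lists A" "length ys = n" by (cases xs) auto
      then show "xs \<in> (\<lambda>(a,xs). a # xs) ` (A \<times> {xs\<in>lists A. length xs = n})" by force
    qed
    then have "{xs\<in>lists A. length xs = Suc n} \<lesssim> A \<times> {xs\<in>lists A. length xs = n}"
      by (rule subset_image_lepoll)
    also have "\<dots> \<lesssim> A \<times> A" using Suc by (intro times_lepoll_mono) auto
    also have "\<dots> \<lesssim> A" by (rule AA)
    finally show ?case .
  qed
  have "lists A = (\<Union>n::nat. {xs\<in>lists A. length xs = n})" by auto
  moreover have "|\<Union>n::nat. {xs\<in>lists A. length xs = n}| \<le>o |A|"
  proof (rule card_of_UNION_ordLeq_infinite[OF inf])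
    show "|UNIV::nat set| \<le>o |A|" using infinite_le_lepoll inf lepoll_ordLeq by blast
    show "\<forall>i\<in>UNIV. |{xs \<in> lists A. length xs = i}| \<le>o |A|" using n lepoll_ordLeq by blast
  qed
  ultimately show ?thesis using lepoll_ordLeq by metis
qed

lemma infinite_UNIV_vec: "infinite (UNIV::('a::euclidean_space) set)"
proof
  assume fin: "finite (UNIV::'a set)"
  obtain e :: 'a where e: "norm e = 1" using vector_choose_size[of 1] by auto
  have "e \<noteq> 0" using e by auto
  have inj: "inj (\<lambda>r::real. scaleR r e)"
  proof (rule injI)
    fix x y :: real assume "scaleR x e = scaleR y e"
    then have "scaleR (x - y) e = 0" by (simp add: scaleR_left_diff_distrib)
    then show "x = y" using \<open>e \<noteq> 0\<close> by simp
  qed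
  have "finite (range (\<lambda>r::real. scaleR r e))" using finite_subset[OF subset_UNIV fin] .
  then have "finite (UNIV::real set)" using finite_imageD[OF _ inj] by blast
  then show False using uncountable_UNIV_real countable_finite by blast
qed

lemma vec_lepoll_real: "(UNIV :: (real ^ 'n) set) \<lesssim> (UNIV :: real set)"
proof -
  obtain L :: "'n list" where L: "set L = UNIV" using finite_list[of "UNIV::'n set"] by auto
  have inj: "inj (\<lambda>x::real^'n. map (\<lambda>i. x $ i) L)"
  proof (rule injI)
    fix x y :: "real^'n" assume "map (\<lambda>i. x $ i) L = map (\<lambda>i. y $ i) L"
    then have "\<forall>i\<in>set L. x $ i = y $ i" by (simp add: map_eq_conv)
    then show "x = y" using L by (simp add: vec_eq_iff)
  qed
  have "(UNIV :: (real ^ 'n) set) \<lesssim> lists (UNIV :: real set)" unfolding lepoll_def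
    by (intro exI[where x="\<lambda>x::real^'n. map (\<lambda>i. x $ i) L"] conjI inj) simp
  also have "\<dots> \<lesssim> (UNIV :: real set)"
    by (rule lists_lepoll) (use uncountable_UNIV_real countable_finite in blast)
  finally show ?thesis .
qed

lemma finsets_lepoll:
  assumes "(UNIV :: 'a set) \<lesssim> (UNIV :: real set)" "infinite (UNIV :: 'a set)"
  shows "{F :: 'a set. finite F} \<lesssim> (UNIV :: real set)"
proof -
  have inj: "inj_on (\<lambda>F. SOME xs. set xs = F) {F :: 'a set. finite F}"
  proof (rule inj_onI)
    fix F G :: "'a set" assume "F \<in> {F. finite F}" "G \<in> {F. finite F}"
      and eq: "(SOME xs. set xs = F) = (SOME xs. set xs = G)"
    then have hF: "\<exists>xs. set xs = F" and hG: "\<exists>xs. set xs = G" using finite_list by blast+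
    have "F = set (SOME xs. set xs = F)" by (rule someI_ex[OF hF, symmetric])
    also have "\<dots> = set (SOME xs. set xs = G)" using eq by (rule arg_cong)
    also have "\<dots> = G" by (rule someI_ex[OF hG])
    finally show "F = G" .
  qed
  have "{F :: 'a set. finite F} \<lesssim> lists (UNIV :: 'a set)" unfolding lepoll_def
    by (intro exI[where x="\<lambda>F. SOME xs. set xs = F"] conjI inj) simp
  also have "\<dots> \<lesssim> (UNIV :: 'a set)" by (rule lists_lepoll[OF assms(2)])
  also have "\<dots> \<lesssim> (UNIV :: real set)" by (rule assms(1))
  finally show ?thesis .
qed

lemma nat_lesspoll_real: "(UNIV :: nat set) \<prec> (UNIV :: real set)"
proof -
  have "(UNIV :: nat set) \<lesssim> (UNIV :: real set)" unfolding lepoll_def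
    by (intro exI[of _ real]) (auto simp: inj_on_def)
  moreover have "\<not> (UNIV :: nat set) \<approx> (UNIV :: real set)"
  proof
    assume "(UNIV :: nat set) \<approx> (UNIV :: real set)"
    then have "(UNIV :: real set) \<approx> (UNIV :: nat set)" by (rule eqpoll_sym)
    then have "countable (UNIV :: real set)" by (rule countable_eqpoll[rotated]) simp
    then show False using uncountable_UNIV_real by blast
  qed
  ultimately show ?thesis unfolding lesspoll_def by blast
qed


lemma quad_root:
  fixes e w :: "'a::euclidean_space" and l a :: real
  assumes e: "norm e = 1" and n: "norm (scaleR l e + w) = a"
  shows "l = - inner e w + sqrt (a^2 - (norm w)^2 + (inner e w)^2)
       \<or> l = - inner e w - sqrt (a^2 - (norm w)^2 + (inner e w)^2)"
proof -
  have ee: "inner e e = 1" using e by (simp add: dot_square_norm)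
  have "a^2 = inner (scaleR l e + w) (scaleR l e + w)" using n by (simp add: dot_square_norm)
  also have "\<dots> = l^2 * inner e e + 2 * l * inner e w + inner w w"
    by (simp add: inner_add_left inner_add_right inner_commute power2_eq_square algebra_simps)
  finally have "a^2 = l^2 + 2 * l * inner e w + (norm w)^2" using ee by (simp add: dot_square_norm)
  then have eq: "(l + inner e w)^2 = a^2 - (norm w)^2 + (inner e w)^2"
    by (simp add: power2_eq_square algebra_simps)
  have "sqrt (a^2 - (norm w)^2 + (inner e w)^2) = \<bar>l + inner e w\<bar>"
    unfolding eq[symmetric] by simp
  then show ?thesis by linarith
qed

lemma construct:
  fixes A :: "real set"
  assumes A0: "A \<subseteq> {0<..}" and Asmall: "A \<prec> (UNIV::real set)"
    and card: "{F::'a::euclidean_space set. finite F} \<lesssim> (UNIV::real set)"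
  shows "\<exists>Y::'a set. (\<forall>x\<in>Y. \<forall>y\<in>Y. x \<noteq> y \<longrightarrow> dist x y \<notin> A) \<and>
           (\<forall>F. finite F \<and> (\<forall>x\<in>F. \<forall>y\<in>F. x \<noteq> y \<longrightarrow> dist x y \<notin> A) \<longrightarrow>
                (\<exists>v. (\<lambda>x. x + v) ` F \<subseteq> Y))"
proof -
  define S where "S = {F::'a set. finite F \<and> (\<forall>x\<in>F. \<forall>y\<in>F. x \<noteq> y \<longrightarrow> dist x y \<notin> A)}"
  define r where "r = |S|"
  have rC: "Card_order r" unfolding r_def by (rule card_of_Card_order)
  have rF: "Field r = S" unfolding r_def by (rule Field_card_of)
  have rW: "well_order_on S r" using card_of_well_order_on[of S] unfolding r_def .
  have lin: "linear_order_on S r" and wf: "wf (r - Id)" using rW unfolding well_order_on_def by auto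
  have tot: "total_on S r" using lin unfolding linear_order_on_def by auto
  have refl: "refl_on S r" using lin unfolding linear_order_on_def partial_order_on_def preorder_on_def by auto
  have Sle: "|S| \<le>o |UNIV::real set|"
  proof -
    have "S \<lesssim> {F::'a set. finite F}" unfolding S_def by (rule subset_imp_lepoll) auto
    also have "\<dots> \<lesssim> (UNIV::real set)" by (rule card)
    finally show ?thesis using lepoll_ordLeq by blast
  qed
  have small: "underS r F \<prec> (UNIV::real set)" if "F \<in> S" for F
  proof -
    have "|underS r F| <o r" using card_of_underS[OF rC] that rF by blast
    then have "|underS r F| <o |UNIV::real set|" using Sle unfolding r_def by (rule ordLess_ordLeq_trans)
    then show ?thesis using lesspoll_ordLess by blast
  qed
  have infR: "infinite (UNIV::real set)" using uncountable_UNIV_real countable_finite by blast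
  obtain e :: 'a where e: "norm e = 1" using vector_choose_size[of 1] by auto
  define Yof where "Yof q = {f + v | F v f. (F, v) \<in> q \<and> f \<in> F}" for q :: "('a set \<times> 'a) set"
  define avoid where "avoid Y \<longleftrightarrow> (\<forall>x\<in>Y. \<forall>y\<in>Y. x \<noteq> y \<longrightarrow> dist x y \<notin> A)" for Y :: "'a set"
  define P where "P = {q. q \<subseteq> S \<times> UNIV \<and> (\<forall>F v w. (F, v) \<in> q \<longrightarrow> (F, w) \<in> q \<longrightarrow> v = w)
      \<and> (\<forall>F\<in>Domain q. \<forall>G. (G, F) \<in> r \<longrightarrow> G \<in> Domain q) \<and> avoid (Yof q)}"
  have Psub: "q \<subseteq> S \<times> UNIV" if "q \<in> P" for q using that unfolding P_def by simp
  have Pfun: "v = w" if "q \<in> P" "(F, v) \<in> q" "(F, w) \<in> q" for q F v w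
    using that unfolding P_def mem_Collect_eq by metis
  have Pclo: "G \<in> Domain q" if "q \<in> P" "F \<in> Domain q" "(G, F) \<in> r" for q F G
    using that unfolding P_def mem_Collect_eq by metis
  have Pav: "avoid (Yof q)" if "q \<in> P" for q using that unfolding P_def by simp
  have Yof_mono: "Yof q \<subseteq> Yof q'" if "q \<subseteq> q'" for q q' using that unfolding Yof_def by blast
  have chains: "\<forall>C\<in>chains P. \<Union>C \<in> P"
  proof
    fix C assume C: "C \<in> chains P"
    then have CP: "C \<subseteq> P" and ch: "\<forall>q1\<in>C. \<forall>q2\<in>C. q1 \<subseteq> q2 \<or> q2 \<subseteq> q1"
      unfolding chains_def chain_subset_def by auto
    have sub: "\<Union>C \<subseteq> S \<times> UNIV" using CP Psub by blast
    have hfun: "\<forall>F v w. (F, v) \<in> \<Union>C \<longrightarrow> (F, w) \<in> \<Union>C \<longrightarrow> v = w"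
    proof (intro allI impI)
      fix F v w assume "(F, v) \<in> \<Union>C" "(F, w) \<in> \<Union>C"
      then obtain q1 q2 where q: "q1 \<in> C" "q2 \<in> C" "(F, v) \<in> q1" "(F, w) \<in> q2" by blast
      have "q1 \<in> P" "q2 \<in> P" using CP q by auto
      have "q1 \<subseteq> q2 \<or> q2 \<subseteq> q1" using ch q by blast
      then show "v = w"
      proof
        assume "q1 \<subseteq> q2" then show "v = w" using Pfun[OF \<open>q2 \<in> P\<close>] q by blast
      next
        assume "q2 \<subseteq> q1" then show "v = w" using Pfun[OF \<open>q1 \<in> P\<close>] q by blast
      qed
    qed
    have clo: "\<forall>F\<in>Domain (\<Union>C). \<forall>G. (G, F) \<in> r \<longrightarrow> G \<in> Domain (\<Union>C)"
    proof (intro ballI allI impI)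
      fix F G assume "F \<in> Domain (\<Union>C)" "(G, F) \<in> r"
      then obtain q where q: "q \<in> C" "F \<in> Domain q" by blast
      then have "q \<in> P" using CP by auto
      then have "G \<in> Domain q" using q \<open>(G, F) \<in> r\<close> Pclo by blast
      then show "G \<in> Domain (\<Union>C)" using q by blast
    qed
    have av: "avoid (Yof (\<Union>C))" unfolding avoid_def
    proof (intro ballI impI)
      fix x y assume x: "x \<in> Yof (\<Union>C)" and y: "y \<in> Yof (\<Union>C)" and xy: "x \<noteq> y"
      obtain F1 v1 f1 q1 where 1: "x = f1 + v1" "(F1, v1) \<in> q1" "q1 \<in> C" "f1 \<in> F1"
        using x unfolding Yof_def by blast
      obtain F2 v2 f2 q2 where 2: "y = f2 + v2" "(F2, v2) \<in> q2" "q2 \<in> C" "f2 \<in> F2"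
        using y unfolding Yof_def by blast
      have "q1 \<subseteq> q2 \<or> q2 \<subseteq> q1" using ch 1 2 by blast
      then obtain q where q: "q \<in> C" "x \<in> Yof q" "y \<in> Yof q"
      proof
        assume "q1 \<subseteq> q2"
        then have "x \<in> Yof q2" "y \<in> Yof q2" using 1 2 unfolding Yof_def by blast+
        then show ?thesis using that 2 by blast
      next
        assume "q2 \<subseteq> q1"
        then have "x \<in> Yof q1" "y \<in> Yof q1" using 1 2 unfolding Yof_def by blast+
        then show ?thesis using that 1 by blast
      qed
      then have "avoid (Yof q)" using CP Pav by blast
      then show "dist x y \<notin> A" using q xy unfolding avoid_def by blast
    qed
    show "\<Union>C \<in> P" unfolding P_def using sub hfun clo av by simp
  qed
  obtain M where MP: "M \<in> P" and Mmax: "\<forall>X\<in>P. M \<subseteq> X \<longrightarrow> X = M"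
    using Zorn_Lemma[OF chains] by blast
  have Msub: "M \<subseteq> S \<times> UNIV" and Mfun: "\<And>F v w. (F, v) \<in> M \<Longrightarrow> (F, w) \<in> M \<Longrightarrow> v = w"
    and Mclo: "\<And>F G. F \<in> Domain M \<Longrightarrow> (G, F) \<in> r \<Longrightarrow> G \<in> Domain M"
    and Mav: "avoid (Yof M)" using Psub[OF MP] Pfun[OF MP] Pclo[OF MP] Pav[OF MP] by blast+
  have dom: "Domain M = S"
  proof (rule ccontr)
    assume "Domain M \<noteq> S"
    moreover have "Domain M \<subseteq> S" using Msub by blast
    ultimately have "S - Domain M \<noteq> {}" by blast
    then obtain F0 where F0: "F0 \<in> S - Domain M" and F0min: "\<And>G. (G, F0) \<in> r - Id \<Longrightarrow> G \<notin> S - Domain M"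
      using wf unfolding wf_eq_minimal by (metis ex_in_conv)
    have DM: "Domain M \<subseteq> underS r F0"
    proof
      fix G assume G: "G \<in> Domain M"
      then have GS: "G \<in> S" "G \<noteq> F0" using Msub F0 by auto
      have "(G, F0) \<in> r"
      proof (rule ccontr)
        assume "(G, F0) \<notin> r"
        then have "(F0, G) \<in> r" using tot GS F0 unfolding total_on_def by blast
        then have "F0 \<in> Domain M" using Mclo G by blast
        then show False using F0 by blast
      qed
      then show "G \<in> underS r F0" using GS unfolding underS_def by blast
    qed
    have DMsmall: "Domain M \<prec> (UNIV::real set)"
      using subset_imp_lepoll[OF DM] small[of F0] F0 lesspoll_trans1 by blast
    define g where "g F = (THE v. (F, v) \<in> M)" for F
    have gM: "g F = v" if "(F, v) \<in> M" for F v
      unfolding g_def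
    proof (rule the_equality)
      show "(F, v) \<in> M" by (rule that)
    next
      fix w assume "(F, w) \<in> M" then show "w = v" using Mfun that by blast
    qed
    have "Yof M \<subseteq> (\<lambda>(F, f). f + g F) ` (Sigma (Domain M) (\<lambda>F. F))"
    proof
      fix x assume "x \<in> Yof M"
      then obtain F v f where "x = f + v" "(F, v) \<in> M" "f \<in> F" unfolding Yof_def by blast
      then show "x \<in> (\<lambda>(F, f). f + g F) ` (Sigma (Domain M) (\<lambda>F. F))"
        using gM by (intro image_eqI[of x _ "(F, f)"]) auto
    qed
    then have "Yof M \<lesssim> Sigma (Domain M) (\<lambda>F. F)" by (rule subset_image_lepoll)
    also have "\<dots> \<lesssim> Domain M \<times> (UNIV::nat set)"
    proof -
      have fin: "finite F" if "F \<in> Domain M" for F using that Msub unfolding S_def by blast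
      have "inj_on (\<lambda>(F, f). (F, to_nat_on F f)) (Sigma (Domain M) (\<lambda>F. F))"
      proof (rule inj_onI)
        fix p q assume pq: "p \<in> Sigma (Domain M) (\<lambda>F. F)" "q \<in> Sigma (Domain M) (\<lambda>F. F)"
          "(\<lambda>(F, f). (F, to_nat_on F f)) p = (\<lambda>(F, f). (F, to_nat_on F f)) q"
        obtain F f G f' where p: "p = (F, f)" and q: "q = (G, f')" by (cases p, cases q) auto
        have "F = G" "to_nat_on F f = to_nat_on F f'" "F \<in> Domain M" "f \<in> F" "f' \<in> F"
          using pq unfolding p q by auto
        then have "f = f'" using inj_onD[OF inj_on_to_nat_on[OF countable_finite[OF fin]]] by blast
        then show "p = q" using p q \<open>F = G\<close> by simp
      qed
      then show ?thesis unfolding lepoll_def by (intro exI[where x="\<lambda>(F, f). (F, to_nat_on F f)"] conjI) auto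
    qed
    finally have YMsmall: "Yof M \<prec> (UNIV::real set)"
      using times_lesspoll[OF infR DMsmall nat_lesspoll_real] lesspoll_trans1 by blast
    have F0fin: "finite F0" and F0good: "\<forall>x\<in>F0. \<forall>y\<in>F0. x \<noteq> y \<longrightarrow> dist x y \<notin> A"
      using F0 unfolding S_def by auto
    define h where "h = (\<lambda>(y, f, a, b). let w = f - y in
        - inner e w + (if b then 1 else -1) * sqrt (a^2 - (norm w)^2 + (inner e w)^2))"
    define Bad where "Bad = {l. \<exists>y\<in>Yof M. \<exists>f\<in>F0. dist (f + scaleR l e) y \<in> A}"
    have "Bad \<subseteq> h ` (Yof M \<times> F0 \<times> A \<times> (UNIV::bool set))"
    proof
      fix l assume "l \<in> Bad"
      then obtain y f where yf: "y \<in> Yof M" "f \<in> F0" "dist (f + scaleR l e) y \<in> A" unfolding Bad_def by blast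
      define a where "a = dist (f + scaleR l e) y"
      have "norm (scaleR l e + (f - y)) = a" unfolding a_def dist_norm by (simp add: algebra_simps)
      then have "l = - inner e (f - y) + sqrt (a^2 - (norm (f - y))^2 + (inner e (f - y))^2)
       \<or> l = - inner e (f - y) - sqrt (a^2 - (norm (f - y))^2 + (inner e (f - y))^2)"
        by (rule quad_root[OF e])
      moreover have "h (y, f, a, True) = - inner e (f - y) + sqrt (a^2 - (norm (f - y))^2 + (inner e (f - y))^2)"
        unfolding h_def Let_def by simp
      moreover have "h (y, f, a, False) = - inner e (f - y) - sqrt (a^2 - (norm (f - y))^2 + (inner e (f - y))^2)"
        unfolding h_def Let_def by simp
      ultimately obtain b where "l = h (y, f, a, b)" by metis
      moreover have "(y, f, a, b) \<in> Yof M \<times> F0 \<times> A \<times> (UNIV::bool set)" using yf a_def by simp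
      ultimately show "l \<in> h ` (Yof M \<times> F0 \<times> A \<times> (UNIV::bool set))" by blast
    qed
    then have "Bad \<lesssim> Yof M \<times> F0 \<times> A \<times> (UNIV::bool set)" by (rule subset_image_lepoll)
    moreover have "Yof M \<times> F0 \<times> A \<times> (UNIV::bool set) \<prec> (UNIV::real set)"
    proof -
      have "(UNIV::bool set) \<prec> (UNIV::real set)" by (rule finite_lesspoll_infinite[OF infR]) simp
      then have AB: "A \<times> (UNIV::bool set) \<prec> (UNIV::real set)" by (rule times_lesspoll[OF infR Asmall])
      have "F0 \<prec> (UNIV::real set)" by (rule finite_lesspoll_infinite[OF infR F0fin])
      then have "F0 \<times> A \<times> (UNIV::bool set) \<prec> (UNIV::real set)" using AB by (rule times_lesspoll[OF infR])
      then show ?thesis by (rule times_lesspoll[OF infR YMsmall])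
    qed
    ultimately have "Bad \<prec> (UNIV::real set)" by (rule lesspoll_trans1)
    then have "Bad \<noteq> UNIV" using lesspoll_not_refl[of "UNIV::real set"] by metis
    then obtain l where l: "l \<notin> Bad" by blast
    define v where "v = scaleR l e"
    define M' where "M' = insert (F0, v) M"
    have YM': "Yof M' = Yof M \<union> (\<lambda>f. f + v) ` F0"
    proof
      show "Yof M' \<subseteq> Yof M \<union> (\<lambda>f. f + v) ` F0"
      proof
        fix x assume "x \<in> Yof M'"
        then obtain F w f where x: "x = f + w" "(F, w) \<in> insert (F0, v) M" "f \<in> F"
          unfolding Yof_def M'_def by blast
        show "x \<in> Yof M \<union> (\<lambda>f. f + v) ` F0"
        proof (cases "(F, w) = (F0, v)")
          case True then show ?thesis using x by auto
        next
          case False then have "(F, w) \<in> M" using x(2) by blast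
          then show ?thesis using x unfolding Yof_def by blast
        qed
      qed
      show "Yof M \<union> (\<lambda>f. f + v) ` F0 \<subseteq> Yof M'"
      proof
        fix x assume "x \<in> Yof M \<union> (\<lambda>f. f + v) ` F0"
        then show "x \<in> Yof M'"
        proof
          assume "x \<in> Yof M" then show ?thesis using Yof_mono[of M M'] unfolding M'_def by blast
        next
          assume "x \<in> (\<lambda>f. f + v) ` F0"
          then obtain f where "f \<in> F0" "x = f + v" by blast
          moreover have "(F0, v) \<in> M'" unfolding M'_def by simp
          ultimately show ?thesis unfolding Yof_def by blast
        qed
      qed
    qed
    have "M' \<in> P" unfolding P_def
    proof (intro CollectI conjI)
      show "M' \<subseteq> S \<times> UNIV" using Msub F0 unfolding M'_def by auto
      show "\<forall>F v w. (F, v) \<in> M' \<longrightarrow> (F, w) \<in> M' \<longrightarrow> v = w"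
      proof (intro allI impI)
        fix F v1 v2 assume 1: "(F, v1) \<in> M'" and 2: "(F, v2) \<in> M'"
        show "v1 = v2"
        proof (cases "F = F0")
          case True
          then have "(F, v1) \<notin> M" "(F, v2) \<notin> M" using F0 by auto
          then show ?thesis using 1 2 unfolding M'_def by auto
        next
          case False
          then have "(F, v1) \<in> M" "(F, v2) \<in> M" using 1 2 unfolding M'_def by auto
          then show ?thesis by (rule Mfun)
        qed
      qed
      show "\<forall>F\<in>Domain M'. \<forall>G. (G, F) \<in> r \<longrightarrow> G \<in> Domain M'"
      proof (intro ballI allI impI)
        fix F G assume F: "F \<in> Domain M'" and GF: "(G, F) \<in> r"
        show "G \<in> Domain M'"
        proof (cases "F = F0")
          case True
          show ?thesis
          proof (cases "G = F0")
            case True then show ?thesis unfolding M'_def by blast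
          next
            case False
            then have GF0: "(G, F0) \<in> r - Id" using GF \<open>F = F0\<close> by blast
            have "G \<in> S" using FieldI1[OF GF] rF by simp
            then have "G \<in> Domain M" using F0min[OF GF0] by blast
            then show ?thesis unfolding M'_def by blast
          qed
        next
          case False
          then have "F \<in> Domain M" using F unfolding M'_def by blast
          then show ?thesis using Mclo GF unfolding M'_def by blast
        qed
      qed
      show "avoid (Yof M')" unfolding avoid_def YM'
      proof (intro ballI impI)
        fix x y assume x: "x \<in> Yof M \<union> (\<lambda>f. f + v) ` F0" and y: "y \<in> Yof M \<union> (\<lambda>f. f + v) ` F0"
          and xy: "x \<noteq> y"
        have mixed: "dist (f + v) z \<notin> A" if "f \<in> F0" "z \<in> Yof M" for f z
          using l that unfolding Bad_def v_def by blast
        show "dist x y \<notin> A"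
        proof (cases "x \<in> Yof M")
          case True
          show ?thesis
          proof (cases "y \<in> Yof M")
            case True then show ?thesis using \<open>x \<in> Yof M\<close> xy Mav unfolding avoid_def by blast
          next
            case False then obtain f where "f \<in> F0" "y = f + v" using y by blast
            then show ?thesis using mixed[of f x] \<open>x \<in> Yof M\<close> by (simp add: dist_commute)
          qed
        next
          case False then obtain f where f: "f \<in> F0" "x = f + v" using x by blast
          show ?thesis
          proof (cases "y \<in> Yof M")
            case True then show ?thesis using mixed[of f y] f by simp
          next
            case False then obtain f' where f': "f' \<in> F0" "y = f' + v" using y by blast
            then have "f \<noteq> f'" using f xy by blast
            moreover have "dist x y = dist f f'" using f f' by (simp add: dist_norm)
            ultimately show ?thesis using F0good f f' by simp
          qed
        qed
      qed
    qed
    moreover have "M \<subseteq> M'" unfolding M'_def by blast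
    ultimately have "M' = M" using Mmax by blast
    then have "F0 \<in> Domain M" unfolding M'_def by blast
    then show False using F0 by blast
  qed
  show ?thesis
  proof (intro exI[where x="Yof M"] conjI allI impI)
    show "\<forall>x\<in>Yof M. \<forall>y\<in>Yof M. x \<noteq> y \<longrightarrow> dist x y \<notin> A" using Mav unfolding avoid_def .
  next
    fix F :: "'a set" assume "finite F \<and> (\<forall>x\<in>F. \<forall>y\<in>F. x \<noteq> y \<longrightarrow> dist x y \<notin> A)"
    then have "F \<in> Domain M" using dom unfolding S_def by blast
    then obtain v where "(F, v) \<in> M" by blast
    then have "(\<lambda>x. x + v) ` F \<subseteq> Yof M" unfolding Yof_def by blast
    then show "\<exists>v. (\<lambda>x. x + v) ` F \<subseteq> Yof M" by blast
  qed
qed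


theorem corollary3:
  fixes n_dummy :: "real ^ 'n"
  shows "(\<forall>t::real. t > 0 \<longrightarrow>
            ideal_types (age_ge t (UNIV :: (real ^ 'n) set) dist) \<and>
            \<not> (\<exists>(M :: 'b set) (d :: 'b \<Rightarrow> 'b \<Rightarrow> real).
                  Metric_space M d \<and> age M d = age_ge t (UNIV :: (real ^ 'n) set) dist))
       \<and> (\<forall>A :: real set. A \<subseteq> {0<..} \<and> A \<prec> (UNIV :: real set) \<longrightarrow>
            ideal_types (age_avoid A (UNIV :: (real ^ 'n) set) dist) \<and>
            (\<exists>Y :: (real ^ 'n) set. age Y dist = age_avoid A (UNIV :: (real ^ 'n) set) dist))"
proof (intro conjI allI impI)
  fix t :: real assume t: "t > 0"
  show "ideal_types (age_ge t (UNIV :: (real ^ 'n) set) dist)" by (rule age_ge_ideal)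
  show "\<not> (\<exists>(M :: 'b set) (d :: 'b \<Rightarrow> 'b \<Rightarrow> real).
                  Metric_space M d \<and> age M d = age_ge t (UNIV :: (real ^ 'n) set) dist)"
  proof
    assume "\<exists>(M :: 'b set) (d :: 'b \<Rightarrow> 'b \<Rightarrow> real).
                  Metric_space M d \<and> age M d = age_ge t (UNIV :: (real ^ 'n) set) dist"
    then obtain M :: "'b set" and d where Md: "Metric_space M d"
      "age M d = age_ge t (UNIV :: (real ^ 'n) set) dist" by (elim exE conjE)
    show False by (rule not_rep[OF t Md])
  qed
next
  fix A :: "real set" assume A: "A \<subseteq> {0<..} \<and> A \<prec> (UNIV :: real set)"
  have card: "{F::(real ^ 'n) set. finite F} \<lesssim> (UNIV::real set)"
    by (rule finsets_lepoll[OF vec_lepoll_real infinite_UNIV_vec])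
  from construct[OF conjunct1[OF A] conjunct2[OF A] card]
  obtain Y :: "(real ^ 'n) set" where Yav: "\<forall>x\<in>Y. \<forall>y\<in>Y. x \<noteq> y \<longrightarrow> dist x y \<notin> A"
    and Yall: "\<forall>F. finite F \<and> (\<forall>x\<in>F. \<forall>y\<in>F. x \<noteq> y \<longrightarrow> dist x y \<notin> A) \<longrightarrow>
                (\<exists>v. (\<lambda>x. x + v) ` F \<subseteq> Y)"
    by (elim exE conjE)
  have eq: "age Y dist = age_avoid A (UNIV :: (real ^ 'n) set) dist"
  proof
    show "age Y dist \<subseteq> age_avoid A (UNIV :: (real ^ 'n) set) dist"
    proof
      fix \<sigma> assume "\<sigma> \<in> age Y dist"
      then obtain F where F: "\<sigma> = iso_type F dist" "F \<subseteq> Y" "finite F" unfolding age_def by blast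
      then have "\<forall>x\<in>F. \<forall>y\<in>F. x \<noteq> y \<longrightarrow> dist x y \<notin> A" using Yav by blast
      then show "\<sigma> \<in> age_avoid A (UNIV :: (real ^ 'n) set) dist" unfolding age_avoid_def using F by blast
    qed
    show "age_avoid A (UNIV :: (real ^ 'n) set) dist \<subseteq> age Y dist"
    proof
      fix \<sigma> assume "\<sigma> \<in> age_avoid A (UNIV :: (real ^ 'n) set) dist"
      then obtain F :: "(real ^ 'n) set" where F: "\<sigma> = iso_type F dist" "finite F"
        "\<forall>x\<in>F. \<forall>y\<in>F. x \<noteq> y \<longrightarrow> dist x y \<notin> A" unfolding age_avoid_def by blast
      then obtain v where v: "(\<lambda>x. x + v) ` F \<subseteq> Y" using Yall by blast
      have "\<sigma> = iso_type ((\<lambda>x. x + v) ` F) dist" using F(1) iso_type_cong[OF translate_isometric] by simp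
      moreover have "finite ((\<lambda>x. x + v) ` F)" using F(2) by simp
      ultimately show "\<sigma> \<in> age Y dist" unfolding age_def using v by blast
    qed
  qed
  show "\<exists>Y :: (real ^ 'n) set. age Y dist = age_avoid A (UNIV :: (real ^ 'n) set) dist"
    using eq by blast
  show "ideal_types (age_avoid A (UNIV :: (real ^ 'n) set) dist)"
    using age_ideal[OF Metric_space_dist, of Y] eq by simp
qed

end
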